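(* For $n\ge 2$ and $k\ge 3$, \[a_{n,k}(213) = \sum_{j=2}^{n} b_{j,k}(213)\,a_{n+1-j,k}(213),\] where $a_{n,k}(213)$ is the number of cyclic permutations $\pi\in\mathfrak S_n$ whose one-line notation avoids $\delta_k=k(k-1)\cdots21$ and whose cycle form $C(\pi)$ avoids $213$, and $b_{n,k}(213)$ is the number of such permutations that additionally satisfy $\pi_1=n$.
   Context: A permutation $\pi\in\mathfrak S_n$ is cyclic if it consists of a single $n$-cycle. For cyclic $\pi$, $C(\pi)=(1,c_2,\dots,c_n)$ with $c_2=\pi(1)$, $c_{i+1}=\pi(c_i)$, viewed as the sequence $1c_2\cdots c_n$ for pattern avoidance. A sequence avoids a pattern $\sigma\in\mathfrak S_m$ if no subsequence of length $m$ is in the same relative order as $\sigma$. The one-line notation of $\pi$ is $\pi_1\cdots\pi_n$, $\pi_i=\pi(i)$. *)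

theory Defs
  imports "HOL-Combinatorics.Permutations"
begin

definition contains_pattern :: "nat list \<Rightarrow> nat list \<Rightarrow> bool" where
  "contains_pattern w \<sigma> \<longleftrightarrow>
     (\<exists>idx :: nat \<Rightarrow> nat.
        (\<forall>a b. a < b \<and> b < length \<sigma> \<longrightarrow> idx a < idx b) \<and>
        (\<forall>a < length \<sigma>. idx a < length w) \<and>
        (\<forall>a < length \<sigma>. \<forall>b < length \<sigma>. (w ! idx a < w ! idx b \<longleftrightarrow> \<sigma> ! a < \<sigma> ! b)))"

definition avoids :: "nat list \<Rightarrow> nat list \<Rightarrow> bool" where
  "avoids w \<sigma> \<longleftrightarrow> \<not> contains_pattern w \<sigma>"

definition one_line :: "nat \<Rightarrow> (nat \<Rightarrow> nat) \<Rightarrow> nat list" where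
  "one_line n \<pi> = map \<pi> [1..<n+1]"

definition cyclic_perm :: "nat \<Rightarrow> (nat \<Rightarrow> nat) \<Rightarrow> bool" where
  "cyclic_perm n \<pi> \<longleftrightarrow> (\<forall>x \<in> {1..n}. \<exists>i. (\<pi> ^^ i) 1 = x)"

definition cycle_form :: "nat \<Rightarrow> (nat \<Rightarrow> nat) \<Rightarrow> nat list" where
  "cycle_form n \<pi> = map (\<lambda>i. (\<pi> ^^ i) 1) [0..<n]"

definition delta :: "nat \<Rightarrow> nat list" where
  "delta k = rev [1..<k+1]"

definition a_213 :: "nat \<Rightarrow> nat \<Rightarrow> nat" where
  "a_213 n k = card {\<pi>. \<pi> permutes {1..n} \<and> cyclic_perm n \<pi> \<and>
       avoids (one_line n \<pi>) (delta k) \<and> avoids (cycle_form n \<pi>) [2,1,3]}"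

definition b_213 :: "nat \<Rightarrow> nat \<Rightarrow> nat" where
  "b_213 n k = card {\<pi>. \<pi> permutes {1..n} \<and> cyclic_perm n \<pi> \<and>
       avoids (one_line n \<pi>) (delta k) \<and> avoids (cycle_form n \<pi>) [2,1,3] \<and> \<pi> 1 = n}"

end

theory Submission
  imports Defs "HOL-Library.Sublist"
begin


definition cyc_list :: "nat \<Rightarrow> (nat \<Rightarrow> nat) \<Rightarrow> nat list \<Rightarrow> bool" where
  "cyc_list n p c \<longleftrightarrow> distinct c \<and> set c = {1..n} \<and> hd c = 1 \<and>
      successively (\<lambda>a b. p a = b) c \<and> p (last c) = 1"

definition pol :: "nat list \<Rightarrow> nat \<Rightarrow> nat" where
  "pol c x = (case map_of (zip c (rotate1 c)) x of None \<Rightarrow> x | Some y \<Rightarrow> y)"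

lemma iter_in:
  fixes p :: "nat \<Rightarrow> nat"
  assumes "p permutes {1..n}" "1 \<le> n"
  shows "(p ^^ i) 1 \<in> {1..n}"
proof (induction i)
  case 0
  then show ?case using assms by simp
next
  case (Suc i)
  then show ?case using permutes_in_image[OF assms(1)] by (metis comp_apply funpow.simps(2))
qed

lemma iter_shift:
  assumes "p permutes A" "(p ^^ i) a = (p ^^ j) a" "i \<le> j"
  shows "(p ^^ (j - i)) a = a"
proof -
  have "inj (p ^^ i)" using assms(1) permutes_inj inj_fn by blast
  moreover have "(p ^^ j) a = (p ^^ i) ((p ^^ (j - i)) a)"
  proof -
    have e: "j = i + (j - i)" using assms(3) by simp
    have "p ^^ (i + (j - i)) = p ^^ i \<circ> p ^^ (j - i)" by (rule funpow_add)
    then have "p ^^ j = p ^^ i \<circ> p ^^ (j - i)" using e by simp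
    then show ?thesis by simp
  qed
  ultimately show ?thesis using assms(2) injD by fastforce
qed

lemma iter_period:
  assumes "(p ^^ q) a = a"
  shows "(p ^^ t) a = (p ^^ (t mod q)) a"
proof -
  have m: "(p ^^ (r * q)) a = a" for r
    by (induction r) (auto simp: funpow_add assms)
  have "t = t mod q + (t div q) * q" by simp
  have "p ^^ (t mod q + (t div q) * q) = p ^^ (t mod q) \<circ> p ^^ ((t div q) * q)" by (rule funpow_add)
  then have "p ^^ t = p ^^ (t mod q) \<circ> p ^^ ((t div q) * q)" using \<open>t = t mod q + (t div q) * q\<close> by simp
  then have "(p ^^ t) a = (p ^^ (t mod q)) ((p ^^ ((t div q) * q)) a)" by simp
  then show ?thesis using m by simp
qed

lemma cyc_gap:
  assumes "p permutes {1..n}" "cyclic_perm n p" "i < j" "(p ^^ i) 1 = (p ^^ j) 1"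
  shows "n \<le> j - i"
proof -
  define q where "q = j - i"
  have q0: "q > 0" using assms q_def by simp
  have per: "(p ^^ q) 1 = 1" using iter_shift[OF assms(1) assms(4)] assms(3) q_def by simp
  have "{1..n} \<subseteq> (\<lambda>t. (p ^^ t) 1) ` {..<q}"
  proof
    fix x assume "x \<in> {1..n}"
    then obtain t where "(p ^^ t) 1 = x" using assms(2) unfolding cyclic_perm_def by blast
    then have "(p ^^ (t mod q)) 1 = x" using iter_period[OF per] by simp
    moreover have "t mod q < q" using q0 by simp
    ultimately show "x \<in> (\<lambda>t. (p ^^ t) 1) ` {..<q}" by blast
  qed
  then have "card {1..n} \<le> card ((\<lambda>t. (p ^^ t) 1) ` {..<q})" by (intro card_mono) auto
  also have "\<dots> \<le> q" using card_image_le[of "{..<q}"] by simp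
  finally show ?thesis using q_def by simp
qed

lemma cyc_return:
  assumes "p permutes {1..n}" "cyclic_perm n p" "1 \<le> n"
  shows "(p ^^ n) 1 = 1"
proof -
  let ?f = "\<lambda>t. (p ^^ t) 1"
  have "?f ` {0..n} \<subseteq> {1..n}" using iter_in[OF assms(1,3)] by auto
  then have "card (?f ` {0..n}) \<le> card {1..n}" by (intro card_mono) auto
  then have cle: "card (?f ` {0..n}) \<le> n" by simp
  have "\<not> inj_on ?f {0..n}"
  proof
    assume "inj_on ?f {0..n}"
    then have "card (?f ` {0..n}) = card {0..n}" by (rule card_image)
    then show False using cle by simp
  qed
  then obtain i j where ij: "i \<in> {0..n}" "j \<in> {0..n}" "i \<noteq> j" "?f i = ?f j"
    unfolding inj_on_def by blast
  show ?thesis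
  proof (cases "i < j")
    case True
    then have "n \<le> j - i" using cyc_gap[OF assms(1,2)] ij by blast
    then have "i = 0" "j = n" using ij by auto
    then show ?thesis using ij by simp
  next
    case False
    then have "j < i" using ij by simp
    then have "n \<le> i - j" using cyc_gap[OF assms(1,2)] ij by metis
    then have "j = 0" "i = n" using ij by auto
    then show ?thesis using ij by simp
  qed
qed

lemma G1:
  assumes "p permutes {1..n}" "cyclic_perm n p" "1 \<le> n"
  shows "cyc_list n p (cycle_form n p)"
proof -
  let ?f = "\<lambda>t. (p ^^ t) 1"
  have cf: "cycle_form n p = map ?f [0..<n]" by (simp add: cycle_form_def)
  have inj: "inj_on ?f {0..<n}"
  proof (rule inj_onI)
    fix i j assume h: "i \<in> {0..<n}" "j \<in> {0..<n}" "?f i = ?f j"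
    show "i = j"
    proof (rule ccontr)
      assume "i \<noteq> j"
      then consider "i < j" | "j < i" by linarith
      then show False
      proof cases
        case 1
        have "n \<le> j - i" using cyc_gap[OF assms(1,2) 1] h(3) by simp
        then show False using h(2) by auto
      next
        case 2
        have "n \<le> i - j" using cyc_gap[OF assms(1,2) 2] h(3) by simp
        then show False using h(1) by auto
      qed
    qed
  qed
  have d: "distinct (cycle_form n p)" using inj cf by (simp add: distinct_map)
  have sub: "set (cycle_form n p) \<subseteq> {1..n}" using cf iter_in[OF assms(1,3)] by auto
  have "card (set (cycle_form n p)) = length (cycle_form n p)" using d by (rule distinct_card)
  then have "card (set (cycle_form n p)) = n" using cf by simp
  then have s: "set (cycle_form n p) = {1..n}" using sub by (simp add: card_subset_eq)
  have h: "hd (cycle_form n p) = 1" using cf assms(3) by (simp add: hd_map)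
  have su: "successively (\<lambda>a b. p a = b) (cycle_form n p)"
    unfolding cf successively_conv_nth by auto
  have l: "last (cycle_form n p) = ?f (n - 1)" using cf assms(3) by (simp add: last_map)
  have e: "Suc (n - 1) = n" using assms(3) by simp
  have "p (?f (n - 1)) = ?f (Suc (n - 1))" by simp
  then have "p (?f (n - 1)) = ?f n" using e by simp
  then have "p (last (cycle_form n p)) = 1" using l cyc_return[OF assms] by simp
  then show ?thesis using d s h su unfolding cyc_list_def by blast
qed

lemma cyc_len:
  assumes "cyc_list n p c" shows "length c = n"
proof -
  have "card (set c) = length c" using assms unfolding cyc_list_def by (intro distinct_card) simp
  then show ?thesis using assms unfolding cyc_list_def by simp
qed

lemma G2:
  assumes "cyc_list n p c" "1 \<le> n"
  shows "cyclic_perm n p \<and> cycle_form n p = c"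
proof -
  have len: "length c = n" using cyc_len[OF assms(1)] .
  have it: "(p ^^ i) 1 = c ! i" if "i < n" for i
    using that
  proof (induction i)
    case 0
    have "c \<noteq> []" using len assms(2) by auto
    then have "c ! 0 = hd c" by (simp add: hd_conv_nth)
    then show ?case using assms unfolding cyc_list_def by simp
  next
    case (Suc i)
    have su: "successively (\<lambda>a b. p a = b) c" using assms(1) unfolding cyc_list_def by simp
    have "p (c ! i) = c ! Suc i" using successively_nth[OF su, of i] Suc.prems len by simp
    then show ?case using Suc by simp
  qed
  have it': "\<forall>i<n. (p ^^ i) (Suc 0) = c ! i" using it by simp
  have "cycle_form n p = c" unfolding cycle_form_def
    by (rule nth_equalityI) (auto simp: len it')
  moreover have "cyclic_perm n p" unfolding cyclic_perm_def
  proof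
    fix x assume "x \<in> {1..n}"
    then have "x \<in> set c" using assms(1) unfolding cyc_list_def by simp
    then obtain i where "i < n" "c ! i = x" using len by (auto simp: in_set_conv_nth)
    then show "\<exists>i. (p ^^ i) 1 = x" using it by blast
  qed
  ultimately show ?thesis by blast
qed

lemma G3:
  assumes "cyc_list n p c" "cyc_list n q c" "\<And>x. x \<notin> {1..n} \<Longrightarrow> p x = x \<and> q x = x"
  shows "p = q"
proof
  fix x
  show "p x = q x"
  proof (cases "x \<in> set c")
    case False
    then show ?thesis using assms unfolding cyc_list_def by auto
  next
    case True
    then obtain i where i: "i < length c" "c ! i = x" by (auto simp: in_set_conv_nth)
    show ?thesis
    proof (cases "Suc i < length c")
      case True
      have su1: "successively (\<lambda>a b. p a = b) c" using assms(1) unfolding cyc_list_def by simp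
      have su2: "successively (\<lambda>a b. q a = b) c" using assms(2) unfolding cyc_list_def by simp
      show ?thesis using successively_nth[OF su1 True] successively_nth[OF su2 True] i by simp
    next
      case False
      then have "i = length c - 1" using i by simp
      moreover have "c \<noteq> []" using i by auto
      ultimately have "x = last c" using i by (simp add: last_conv_nth)
      then show ?thesis using assms(1,2) unfolding cyc_list_def by simp
    qed
  qed
qed

lemma pol_nth:
  assumes "distinct c" "i < length c"
  shows "pol c (c ! i) = rotate1 c ! i"
  using assms by (simp add: pol_def map_of_zip_nth)

lemma pol_out:
  assumes "x \<notin> set c"
  shows "pol c x = x"
proof -
  have h: "map_of (zip c (rotate1 c)) x = None"
  proof -
    have "map fst (zip c (rotate1 c)) = c" by (simp add: map_fst_zip)
    then have "fst ` set (zip c (rotate1 c)) = set c" by (metis set_map)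
    then show ?thesis using assms by (simp add: map_of_eq_None_iff)
  qed
  show ?thesis unfolding pol_def h by simp
qed

lemma G4:
  assumes "distinct c" "set c = {1..N}" "hd c = 1" "1 \<le> N"
  shows "pol c permutes {1..N} \<and> cyc_list N (pol c) c"
proof -
  have ne: "c \<noteq> []" using assms by auto
  have r: "rotate1 c = tl c @ [hd c]" using ne by (cases c) auto
  have inj: "inj_on (pol c) (set c)"
  proof (rule inj_onI)
    fix x y assume h: "x \<in> set c" "y \<in> set c" "pol c x = pol c y"
    obtain i where i: "i < length c" "c ! i = x" using h by (auto simp: in_set_conv_nth)
    obtain j where j: "j < length c" "c ! j = y" using h by (auto simp: in_set_conv_nth)
    have "rotate1 c ! i = rotate1 c ! j" using h(3) pol_nth[OF assms(1) i(1)] pol_nth[OF assms(1) j(1)] i(2) j(2) by simp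
    then have "i = j" using i j assms(1) by (simp add: nth_eq_iff_index_eq)
    then show "x = y" using i j by simp
  qed
  have into: "pol c x \<in> set c" if xin: "x \<in> set c" for x
  proof -
    obtain i where i: "i < length c" "c ! i = x" using xin by (auto simp: in_set_conv_nth)
    then have "pol c x = rotate1 c ! i" using pol_nth[OF assms(1) i(1)] by simp
    moreover have "rotate1 c ! i \<in> set (rotate1 c)" using i(1) by (intro nth_mem) simp
    ultimately show ?thesis by simp
  qed
  have perm: "pol c permutes {1..N}"
    using inj_imp_permutes[of "pol c" "{1..N}"] inj into pol_out assms(2) by auto
  have su: "successively (\<lambda>a b. pol c a = b) c"
    unfolding successively_conv_nth
  proof (intro allI impI)
    fix i assume i: "Suc i < length c"
    have "pol c (c ! i) = rotate1 c ! i" using pol_nth assms(1) i by simp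
    also have "\<dots> = c ! Suc i" using r i ne by (auto simp: nth_append nth_tl)
    finally show "pol c (c ! i) = c ! Suc i" .
  qed
  have "pol c (last c) = rotate1 c ! (length c - 1)"
    using pol_nth assms(1) ne by (simp add: last_conv_nth)
  also have "\<dots> = 1" using r ne assms(3) by (simp add: nth_append)
  finally have "pol c (last c) = 1" .
  then show ?thesis using perm su assms unfolding cyc_list_def by blast
qed



definition pat :: "nat list \<Rightarrow> bool" where
  "pat w \<longleftrightarrow> (\<exists>x y z. subseq [x, y, z] w \<and> y < x \<and> x < z)"

lemma sub_nth:
  assumes "i < length w" "subseq xs (drop (Suc i) w)"
  shows "subseq (w ! i # xs) w"
proof -
  have "w = take i w @ (w ! i # drop (Suc i) w)" using assms(1) by (simp add: id_take_nth_drop)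
  moreover have "subseq (w ! i # xs) (w ! i # drop (Suc i) w)" using assms(2) by simp
  ultimately show ?thesis by (metis subseq_drop_many)
qed

lemma sub_idx:
  assumes "subseq (x # xs) w"
  shows "\<exists>i<length w. w ! i = x \<and> subseq xs (drop (Suc i) w)"
  using assms
proof (induction w rule: list.induct)
  case Nil
  then show ?case by simp
next
  case (Cons a w)
  show ?case
  proof (cases "a = x")
    case True
    then show ?thesis using Cons.prems by auto
  next
    case False
    then have "subseq (x # xs) w" using Cons.prems by simp
    then obtain i where "i < length w" "w ! i = x" "subseq xs (drop (Suc i) w)" using Cons.IH by blast
    then show ?thesis by (intro exI[of _ "Suc i"]) auto
  qed
qed

lemma all3: "(\<forall>a<(3::nat). P a) \<longleftrightarrow> P 0 \<and> P 1 \<and> P 2"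
proof
  assume h: "\<forall>a<(3::nat). P a"
  show "P 0 \<and> P 1 \<and> P 2" using h[rule_format, of 0] h[rule_format, of 1] h[rule_format, of 2] by simp
next
  assume "P 0 \<and> P 1 \<and> P 2"
  then show "\<forall>a<(3::nat). P a" by (auto simp: less_Suc_eq numeral_3_eq_3 numeral_2_eq_2)
qed

lemma avoid213: "avoids w [2,1,3] \<longleftrightarrow> \<not> pat w"
proof -
  have "contains_pattern w [2,1,3] \<longleftrightarrow> pat w"
  proof
    assume "contains_pattern w [2,1,3]"
    then obtain idx where h: "\<forall>a b. a < b \<and> b < length [2,1,3::nat] \<longrightarrow> idx a < idx b"
      "\<forall>a<length [2,1,3::nat]. idx a < length w"
      "\<forall>a<length [2,1,3::nat]. \<forall>b<length [2,1,3::nat]. (w ! idx a < w ! idx b \<longleftrightarrow> [2,1,3::nat] ! a < [2,1,3] ! b)"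
      unfolding contains_pattern_def by blast
    have o: "idx 0 < idx 1" "idx 1 < idx 2" using h(1)[rule_format, of 0 1] h(1)[rule_format, of 1 2] by auto
    have v: "w ! idx 1 < w ! idx 0" "w ! idx 0 < w ! idx 2"
      using h(3)[rule_format, of 1 0] h(3)[rule_format, of 0 2] by auto
    have l: "idx 2 < length w" using h(2)[rule_format, of 2] by simp
    have "subseq [w ! idx 2] (drop (Suc (idx 1)) w)"
      using sub_nth[of "idx 2 - Suc (idx 1)" "drop (Suc (idx 1)) w" "[]"] o l by simp
    then have "subseq [w ! idx 1, w ! idx 2] (drop (Suc (idx 0)) w)"
      using sub_nth[of "idx 1 - Suc (idx 0)" "drop (Suc (idx 0)) w"] o l by simp
    then have "subseq [w ! idx 0, w ! idx 1, w ! idx 2] w"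
      using sub_nth[of "idx 0" w] o l by simp
    then show "pat w" using v unfolding pat_def by blast
  next
    assume "pat w"
    then obtain x y z where s: "subseq [x, y, z] w" "y < x" "x < z" unfolding pat_def by blast
    obtain i where i: "i < length w" "w ! i = x" "subseq [y, z] (drop (Suc i) w)"
      using sub_idx[OF s(1)] by blast
    obtain j' where j': "j' < length (drop (Suc i) w)" "drop (Suc i) w ! j' = y"
      "subseq [z] (drop (Suc j') (drop (Suc i) w))"
      using sub_idx[OF i(3)] by blast
    obtain l' where l': "l' < length (drop (Suc j') (drop (Suc i) w))"
      "drop (Suc j') (drop (Suc i) w) ! l' = z"
      using sub_idx[OF j'(3)] by blast
    define j where "j = Suc i + j'"
    define l where "l = Suc j + l'"
    have jj: "j < length w" "w ! j = y" using j' j_def by auto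
    have ll: "l < length w" "w ! l = z" using l' l_def j_def by (auto simp: add.commute add.left_commute)
    define idx where "idx = (\<lambda>a::nat. if a = 0 then i else if a = 1 then j else l)"
    show "contains_pattern w [2,1,3]" unfolding contains_pattern_def
      apply (rule exI[of _ idx])
      using i jj ll s j_def l_def
      by (simp add: idx_def all3)
  qed
  then show ?thesis unfolding avoids_def by simp
qed

lemma subseq_set: "subseq xs ys \<Longrightarrow> set xs \<subseteq> set ys"
  by (induction rule: list_emb.induct) auto

lemma pat_cons_min:
  assumes "pat (a # w)" "\<forall>v\<in>set w. a \<le> v"
  shows "pat w"
proof -
  obtain x y z where s: "subseq [x, y, z] (a # w)" "y < x" "x < z" using assms(1) unfolding pat_def by blast
  show ?thesis
  proof (cases "x = a")
    case True
    have "subseq [y, z] w" using s(1) True by (metis subseq_Cons2_iff)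
    then have "y \<in> set w" using subseq_set by fastforce
    then have "a \<le> y" using assms(2) by blast
    then show ?thesis using True s(2) by simp
  next
    case False
    then have "subseq [x, y, z] w" using s(1) by (metis subseq_Cons2_iff)
    then show ?thesis using s unfolding pat_def by blast
  qed
qed

lemma pat_mono:
  assumes "subseq u w" "pat u"
  shows "pat w"
proof -
  obtain x y z where s: "subseq [x, y, z] u" "y < x" "x < z" using assms(2) unfolding pat_def by blast
  have "subseq [x, y, z] w" using s(1) assms(1) by (rule subseq_order.order_trans)
  then show ?thesis using s unfolding pat_def by blast
qed

lemma pat_cons: "pat w \<Longrightarrow> pat (a # w)"
proof -
  have "subseq w (a # w)" by (rule list_emb.list_emb_Cons) (rule subseq_order.order_refl)
  moreover assume "pat w"
  ultimately show "pat (a # w)" by (rule pat_mono)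
qed

lemma pat_map:
  assumes "pat w" "\<forall>x\<in>set w. \<forall>y\<in>set w. x < y \<longrightarrow> g x < g y"
  shows "pat (map g w)"
proof -
  obtain x y z where s: "subseq [x, y, z] w" "y < x" "x < z" using assms(1) unfolding pat_def by blast
  have "set [x, y, z] \<subseteq> set w" using s(1) by (rule subseq_set)
  then have "g y < g x" "g x < g z" using assms(2) s by auto
  moreover have "subseq [g x, g y, g z] (map g w)" using subseq_map[OF s(1)] by simp
  ultimately show ?thesis unfolding pat_def by blast
qed

lemma split3:
  fixes x y z m :: nat
  assumes h: "subseq [x, y, z] (L @ S)" "\<forall>v\<in>set L. m < v" "\<forall>v\<in>set S. v < m" "x < z"
  shows "subseq [x, y, z] L \<or> subseq [x, y, z] S"
proof -
  obtain xs1 xs2 where y: "[x, y, z] = xs1 @ xs2" "subseq xs1 L" "subseq xs2 S"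
    using subseq_append_iff[THEN iffD1, OF h(1)] by blast
  consider "xs2 = []" | "xs1 = []" | "xs1 \<noteq> []" "xs2 \<noteq> []" by blast
  then show ?thesis
  proof cases
    case 1
    then have "xs1 = [x, y, z]" using y(1) by simp
    then show ?thesis using y(2) by simp
  next
    case 2
    then have "xs2 = [x, y, z]" using y(1) by simp
    then show ?thesis using y(3) by simp
  next
    case 3
    have "hd xs1 = x" using y(1) 3 by (cases xs1) auto
    then have x1: "x \<in> set xs1" using 3 by auto
    have "last [x, y, z] = last xs2" using y(1) 3 by (simp add: last_append)
    then have z2: "z \<in> set xs2" using 3 by (metis last.simps last_in_set list.discI)
    have "x \<in> set L" using x1 subseq_set[OF y(2)] by blast
    then have "m < x" using h(2) by blast
    moreover have "z \<in> set S" using z2 subseq_set[OF y(3)] by blast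
    then have "z < m" using h(3) by blast
    ultimately have False using h(4) by simp
    then show ?thesis ..
  qed
qed

lemma pat_split:
  assumes "pat (m # L @ S)" "\<forall>x\<in>set L. m < x" "\<forall>x\<in>set S. x < m"
  shows "pat (m # S) \<or> pat L"
proof -
  obtain x y z where s: "subseq [x, y, z] (m # L @ S)" "y < x" "x < z" using assms(1) unfolding pat_def by blast
  show ?thesis
  proof (cases "x = m")
    case True
    then have h: "subseq [y, z] (L @ S)" using s(1) by (metis subseq_Cons2_iff)
    obtain ys1 ys2 where y: "[y, z] = ys1 @ ys2" "subseq ys1 L" "subseq ys2 S"
      using subseq_append_iff[THEN iffD1, OF h] by blast
    have "ys1 = []"
    proof (rule ccontr)
      assume "ys1 \<noteq> []"
      then have "y \<in> set ys1" using y(1) by (cases ys1) auto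
      then have "y \<in> set L" using subseq_set[OF y(2)] by blast
      then show False using assms(2) s(2) True by auto
    qed
    then have "subseq [y, z] S" using y by simp
    then have "subseq [m, y, z] (m # S)" by (metis subseq_Cons2)
    then show ?thesis using s True unfolding pat_def by blast
  next
    case False
    then have h: "subseq [x, y, z] (L @ S)" using s(1) by (metis subseq_Cons2_iff)
    have "subseq [x, y, z] L \<or> subseq [x, y, z] S" using split3[OF h assms(2,3) s(3)] .
    moreover have "subseq [x, y, z] S \<Longrightarrow> subseq [x, y, z] (m # S)" by (rule list_emb.list_emb_Cons)
    ultimately show ?thesis using s unfolding pat_def by blast
  qed
qed



definition dec :: "(nat \<Rightarrow> nat) \<Rightarrow> nat \<Rightarrow> nat \<Rightarrow> bool" where
  "dec p k n \<longleftrightarrow> (\<exists>f. (\<forall>a b. a < b \<and> b < k \<longrightarrow> f a < f b) \<and> (\<forall>a<k. f a \<in> {1..n}) \<and>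
      (\<forall>a b. a < b \<and> b < k \<longrightarrow> p (f b) < p (f a)))"

definition comb :: "nat \<Rightarrow> (nat \<Rightarrow> nat) \<Rightarrow> (nat \<Rightarrow> nat) \<Rightarrow> nat \<Rightarrow> nat" where
  "comb m s t x = (if x < m then s x else if t (x + 1 - m) = 1 then s m else t (x + 1 - m) + m - 1)"

lemma delta_nth: "a < k \<Longrightarrow> delta k ! a = k - a"
  unfolding delta_def by (simp add: rev_nth nth_upt del: upt_Suc)

lemma one_line_nth: "i < n \<Longrightarrow> one_line n p ! i = p (Suc i)"
  unfolding one_line_def by (simp del: upt_Suc)

lemma length_delta: "length (delta k) = k"
  unfolding delta_def by (simp del: upt_Suc)

lemma length_one_line: "length (one_line n p) = n"
  unfolding one_line_def by (simp del: upt_Suc)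

lemma avoid_dec: "avoids (one_line n p) (delta k) \<longleftrightarrow> \<not> dec p k n"
proof -
  have "contains_pattern (one_line n p) (delta k) \<longleftrightarrow> dec p k n"
  proof
    assume "contains_pattern (one_line n p) (delta k)"
    then obtain idx where h: "\<forall>a b. a < b \<and> b < k \<longrightarrow> idx a < idx b"
      "\<forall>a<k. idx a < n"
      "\<forall>a<k. \<forall>b<k. (one_line n p ! idx a < one_line n p ! idx b \<longleftrightarrow> delta k ! a < delta k ! b)"
      unfolding contains_pattern_def length_delta length_one_line by blast
    define f where "f a = Suc (idx a)" for a
    have "p (f b) < p (f a)" if "a < b" "b < k" for a b
    proof -
      have "one_line n p ! idx b < one_line n p ! idx a \<longleftrightarrow> delta k ! b < delta k ! a"
        using h(3) that by auto
      moreover have "delta k ! b < delta k ! a" using that by (simp add: delta_nth)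
      ultimately show ?thesis using that h(2) by (simp add: one_line_nth f_def)
    qed
    moreover have "\<forall>a b. a < b \<and> b < k \<longrightarrow> f a < f b" using h(1) by (simp add: f_def)
    moreover have "\<forall>a<k. f a \<in> {1..n}" using h(2) by (simp add: f_def Suc_le_eq)
    ultimately show "dec p k n" unfolding dec_def by blast
  next
    assume "dec p k n"
    then obtain f where h: "\<forall>a b. a < b \<and> b < k \<longrightarrow> f a < f b" "\<forall>a<k. f a \<in> {1..n}"
      "\<forall>a b. a < b \<and> b < k \<longrightarrow> p (f b) < p (f a)" unfolding dec_def by blast
    define idx where "idx a = f a - 1" for a
    have i1: "\<forall>a b. a < b \<and> b < k \<longrightarrow> idx a < idx b"
    proof (intro allI impI)
      fix a b assume ab: "a < b \<and> b < k"
      then have "f a < f b" "1 \<le> f a" using h(1,2) by auto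
      then show "idx a < idx b" unfolding idx_def by simp
    qed
    have i2: "\<forall>a<k. idx a < n" using h(2) unfolding idx_def by fastforce
    have i3: "(one_line n p ! idx a < one_line n p ! idx b \<longleftrightarrow> delta k ! a < delta k ! b)"
      if "a < k" "b < k" for a b
    proof -
      have sa: "Suc (idx a) = f a" using h(2) that unfolding idx_def by auto
      have fa: "one_line n p ! idx a = p (f a)" using i2 that one_line_nth sa by metis
      have sb: "Suc (idx b) = f b" using h(2) that unfolding idx_def by auto
      have fb: "one_line n p ! idx b = p (f b)" using i2 that one_line_nth sb by metis
      consider "a < b" | "a = b" | "b < a" by linarith
      then show ?thesis
      proof cases
        case 1
        then have "p (f b) < p (f a)" using h(3) that by blast
        then show ?thesis using fa fb 1 that by (simp add: delta_nth)
      next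
        case 2
        then show ?thesis by simp
      next
        case 3
        then have "p (f a) < p (f b)" using h(3) that by blast
        then show ?thesis using fa fb 3 that by (simp add: delta_nth)
      qed
    qed
    show "contains_pattern (one_line n p) (delta k)" unfolding contains_pattern_def
      unfolding length_delta length_one_line
      using i1 i2 i3 by (intro exI[of _ idx]) blast
  qed
  then show ?thesis unfolding avoids_def by simp
qed

context
  fixes m n' :: nat and s t :: "nat \<Rightarrow> nat"
  assumes s: "s permutes {1..m}" and t: "t permutes {1..n'}" and m1: "1 \<le> m" and n1: "1 \<le> n'"
begin

definition H :: "nat \<Rightarrow> nat" where "H v = (if v = 1 then s m else v + m - 1)"

lemma sm: "s m \<le> m" "1 \<le> s m"
  using permutes_in_image[OF s, of m] m1 by auto

lemma s_le: "x \<in> {1..m} \<Longrightarrow> s x \<in> {1..m}"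
  using permutes_in_image[OF s] by auto

lemma t_in: "y \<in> {1..n'} \<Longrightarrow> t y \<in> {1..n'}"
  using permutes_in_image[OF t] by auto

lemma H_mono: "1 \<le> u \<Longrightarrow> u < v \<Longrightarrow> H u < H v"
  using sm unfolding H_def by auto

lemma H_mono': "1 \<le> u \<Longrightarrow> 1 \<le> v \<Longrightarrow> H u < H v \<Longrightarrow> u < v"
  using H_mono by (metis less_asym nat_neq_iff)

lemma comb_hi: "m \<le> x \<Longrightarrow> comb m s t x = H (t (x + 1 - m))"
  unfolding comb_def H_def by simp

lemma comb_lo: "x < m \<Longrightarrow> comb m s t x = s x"
  unfolding comb_def by simp

lemma D1:
  assumes "2 \<le> k" "dec (comb m s t) k (m + n' - 1)"
  shows "dec s k m \<or> dec t k n'"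
proof -
  let ?P = "comb m s t"
  obtain f where h: "\<forall>a b. a < b \<and> b < k \<longrightarrow> f a < f b" "\<forall>a<k. f a \<in> {1..m + n' - 1}"
      "\<forall>a b. a < b \<and> b < k \<longrightarrow> ?P (f b) < ?P (f a)" using assms(2) unfolding dec_def by blast
  have fmono: "f a \<le> f b" if "a \<le> b" "b < k" for a b
    using h(1) that by (metis le_eq_less_or_eq less_imp_le_nat)
  show ?thesis
  proof (cases "m \<le> f 0")
    case True
    define g where "g a = f a + 1 - m" for a
    have ge: "m \<le> f a" if "a < k" for a using fmono[of 0 a] that True by simp
    have tge: "1 \<le> t (g a)" if "a < k" for a
    proof -
      have "g a \<in> {1..n'}" using ge[OF that] h(2) that unfolding g_def by force
      then show ?thesis using t_in by auto
    qed
    have "\<forall>a b. a < b \<and> b < k \<longrightarrow> g a < g b"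
    proof (intro allI impI)
      fix a b assume ab: "a < b \<and> b < k"
      then have "f a < f b" "m \<le> f a" using h(1) ge by auto
      then show "g a < g b" unfolding g_def by simp
    qed
    moreover have "\<forall>a<k. g a \<in> {1..n'}" using ge h(2) unfolding g_def by force
    moreover have "\<forall>a b. a < b \<and> b < k \<longrightarrow> t (g b) < t (g a)"
    proof (intro allI impI)
      fix a b assume ab: "a < b \<and> b < k"
      have "?P (f b) < ?P (f a)" using h(3) ab by blast
      then have "H (t (g b)) < H (t (g a))" using comb_hi ge ab unfolding g_def by simp
      then show "t (g b) < t (g a)" using H_mono' tge ab by simp
    qed
    ultimately show ?thesis unfolding dec_def by blast
  next
    case False
    then have f0: "f 0 < m" by simp
    have P0: "?P (f 0) \<le> m" using comb_lo[OF f0] s_le[of "f 0"] h(2) f0 assms(1) by force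
    have big: "?P (f a) = s m" if "0 < a" "a < k" "m \<le> f a" for a
    proof (rule ccontr)
      assume ne: "?P (f a) \<noteq> s m"
      have "?P (f a) = H (t (f a + 1 - m))" using comb_hi that by simp
      then have "t (f a + 1 - m) \<noteq> 1" "?P (f a) = t (f a + 1 - m) + m - 1" using ne unfolding H_def by auto
      moreover have "t (f a + 1 - m) \<ge> 1"
      proof -
        have "f a + 1 - m \<in> {1..n'}" using that h(2) by force
        then show ?thesis using t_in by auto
      qed
      ultimately have "?P (f a) > m" by simp
      moreover have "?P (f a) < ?P (f 0)" using h(3) that by blast
      ultimately show False using P0 by simp
    qed
    have low: "f a < m" if "a < k - 1" for a
    proof (rule ccontr)
      assume "\<not> f a < m"
      then have fa: "m \<le> f a" by simp
      have a0: "0 < a" using f0 fa by (cases a) auto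
      have "m \<le> f (k - 1)" using fmono[of a "k - 1"] that fa assms(1) by simp
      then have "?P (f (k - 1)) = s m" using big[of "k - 1"] a0 that by simp
      moreover have "?P (f a) = s m" using big[of a] a0 that fa by simp
      moreover have "?P (f (k - 1)) < ?P (f a)" using h(3) that assms(1) by simp
      ultimately show False by simp
    qed
    show ?thesis
    proof (cases "f (k - 1) < m")
      case True
      have lo: "f a < m" if "a < k" for a
      proof -
        have "a \<le> k - 1" "k - 1 < k" using that by auto
        then have "f a \<le> f (k - 1)" using fmono by blast
        then show ?thesis using True by simp
      qed
      have "\<forall>a<k. f a \<in> {1..m}" using lo h(2) by fastforce
      moreover have "\<forall>a b. a < b \<and> b < k \<longrightarrow> s (f b) < s (f a)"
      proof (intro allI impI)
        fix a b assume ab: "a < b \<and> b < k"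
        then have "?P (f b) < ?P (f a)" using h(3) by blast
        moreover have "?P (f b) = s (f b)" "?P (f a) = s (f a)" using lo ab comb_lo by auto
        ultimately show "s (f b) < s (f a)" by simp
      qed
      ultimately show ?thesis using h(1) unfolding dec_def by blast
    next
      case False
      define g where "g a = (if a < k - 1 then f a else m)" for a
      have Pk: "?P (f (k - 1)) = s m" using big[of "k - 1"] False assms(1) by simp
      have "\<forall>a b. a < b \<and> b < k \<longrightarrow> g a < g b"
        using h(1) low unfolding g_def by auto
      moreover have "\<forall>a<k. g a \<in> {1..m}" using h(2) low m1 unfolding g_def by fastforce
      moreover have "\<forall>a b. a < b \<and> b < k \<longrightarrow> s (g b) < s (g a)"
      proof (intro allI impI)
        fix a b assume ab: "a < b \<and> b < k"
        then have al: "a < k - 1" by (simp add: less_diff_conv)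
        show "s (g b) < s (g a)"
        proof (cases "b < k - 1")
          case True
          have "?P (f b) < ?P (f a)" using h(3) ab by blast
          moreover have "?P (f b) = s (f b)" "?P (f a) = s (f a)" using low[OF al] low[OF True] comb_lo by auto
          ultimately show ?thesis using True al unfolding g_def by simp
        next
          case False
          then have "b = k - 1" using ab by linarith
          then have "s (g b) = ?P (f (k - 1))" using Pk unfolding g_def by simp
          also have "\<dots> < ?P (f a)" using h(3) ab al by simp
          also have "\<dots> = s (g a)" using comb_lo[OF low[OF al]] al unfolding g_def by simp
          finally show ?thesis .
        qed
      qed
      ultimately show ?thesis unfolding dec_def by blast
    qed
  qed
qed

lemma D2:
  assumes "1 \<le> k" "dec s k m"
  shows "dec (comb m s t) k (m + n' - 1)"
proof -
  let ?P = "comb m s t"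
  obtain g where h: "\<forall>a b. a < b \<and> b < k \<longrightarrow> g a < g b" "\<forall>a<k. g a \<in> {1..m}"
      "\<forall>a b. a < b \<and> b < k \<longrightarrow> s (g b) < s (g a)" using assms(2) unfolding dec_def by blast
  have gmono: "g a < g (k - 1)" if "a < k - 1" for a using h(1) that by simp
  show ?thesis
  proof (cases "g (k - 1) < m")
    case True
    have lo: "g a < m" if "a < k" for a
    proof (cases "a = k - 1")
      case True
      then show ?thesis using \<open>g (k - 1) < m\<close> by simp
    next
      case False
      then have "a < k - 1" using that by simp
      then show ?thesis using gmono[of a] \<open>g (k - 1) < m\<close> by simp
    qed
    have "\<forall>a<k. g a \<in> {1..m + n' - 1}" using h(2) n1 by fastforce
    moreover have "\<forall>a b. a < b \<and> b < k \<longrightarrow> ?P (g b) < ?P (g a)"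
    proof (intro allI impI)
      fix a b assume ab: "a < b \<and> b < k"
      then have "s (g b) < s (g a)" using h(3) by blast
      moreover have "?P (g b) = s (g b)" "?P (g a) = s (g a)" using lo ab comb_lo by auto
      ultimately show "?P (g b) < ?P (g a)" by simp
    qed
    ultimately show ?thesis using h(1) unfolding dec_def by blast
  next
    case False
    have "g (k - 1) \<in> {1..m}" using h(2) assms(1) by simp
    then have gk: "g (k - 1) = m" using False by simp
    have "1 \<in> t ` {1..n'}" using permutes_image[OF t] n1 by simp
    then obtain q where q: "q \<in> {1..n'}" "t q = 1" by (auto elim!: imageE)
    have Pq: "?P (q + m - 1) = s m"
    proof -
      have "m \<le> q + m - 1" using q by auto
      moreover have "q + m - 1 + 1 - m = q" using q by auto
      ultimately show ?thesis using comb_hi q unfolding H_def by simp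
    qed
    define f where "f a = (if a < k - 1 then g a else q + m - 1)" for a
    have lo: "g a < m" if "a < k - 1" for a using gmono[OF that] gk by simp
    have "\<forall>a b. a < b \<and> b < k \<longrightarrow> f a < f b"
    proof (intro allI impI)
      fix a b assume ab: "a < b \<and> b < k"
      then have al: "a < k - 1" by (simp add: less_diff_conv)
      show "f a < f b"
      proof (cases "b < k - 1")
        case True
        then show ?thesis using h(1) ab al unfolding f_def by simp
      next
        case False
        have "g a < q + m - 1" using lo[OF al] q by auto
        then show ?thesis using False al unfolding f_def by simp
      qed
    qed
    moreover have "\<forall>a<k. f a \<in> {1..m + n' - 1}" using h(2) q lo unfolding f_def by fastforce
    moreover have "\<forall>a b. a < b \<and> b < k \<longrightarrow> ?P (f b) < ?P (f a)"
    proof (intro allI impI)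
      fix a b assume ab: "a < b \<and> b < k"
      then have al: "a < k - 1" by (simp add: less_diff_conv)
      show "?P (f b) < ?P (f a)"
      proof (cases "b < k - 1")
        case True
        have "s (g b) < s (g a)" using h(3) ab by blast
        moreover have "?P (g b) = s (g b)" "?P (g a) = s (g a)" using lo[OF al] lo[OF True] comb_lo by auto
        ultimately show ?thesis using True al unfolding f_def by simp
      next
        case False
        then have "b = k - 1" using ab by linarith
        then have "?P (f b) = s (g (k - 1))" using Pq gk unfolding f_def by simp
        also have "\<dots> < s (g a)" using h(3) ab al by simp
        also have "\<dots> = ?P (f a)" using comb_lo[OF lo[OF al]] al unfolding f_def by simp
        finally show ?thesis .
      qed
    qed
    ultimately show ?thesis unfolding dec_def by blast
  qed
qed

lemma D3:
  assumes "dec t k n'"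
  shows "dec (comb m s t) k (m + n' - 1)"
proof -
  let ?P = "comb m s t"
  obtain g where h: "\<forall>a b. a < b \<and> b < k \<longrightarrow> g a < g b" "\<forall>a<k. g a \<in> {1..n'}"
      "\<forall>a b. a < b \<and> b < k \<longrightarrow> t (g b) < t (g a)" using assms unfolding dec_def by blast
  define f where "f a = g a + m - 1" for a
  have Pf: "?P (f a) = H (t (g a))" if "a < k" for a
  proof -
    have "m \<le> f a" using h(2) that unfolding f_def by force
    moreover have "f a + 1 - m = g a" using h(2) that m1 unfolding f_def by force
    ultimately show ?thesis using comb_hi by simp
  qed
  have t1: "1 \<le> t (g a)" if "a < k" for a using t_in h(2) that by force
  have "\<forall>a b. a < b \<and> b < k \<longrightarrow> f a < f b"
  proof (intro allI impI)
    fix a b assume ab: "a < b \<and> b < k"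
    then have "g a < g b" using h(1) by blast
    then show "f a < f b" using m1 unfolding f_def by simp
  qed
  moreover have "\<forall>a<k. f a \<in> {1..m + n' - 1}" using h(2) m1 unfolding f_def by force
  moreover have "\<forall>a b. a < b \<and> b < k \<longrightarrow> ?P (f b) < ?P (f a)"
  proof (intro allI impI)
    fix a b assume ab: "a < b \<and> b < k"
    then have "t (g b) < t (g a)" using h(3) by blast
    then have "H (t (g b)) < H (t (g a))" using H_mono t1 ab by simp
    then show "?P (f b) < ?P (f a)" using Pf ab by simp
  qed
  ultimately show ?thesis unfolding dec_def by blast
qed

end



lemma comb_out:
  assumes s: "s permutes {1..m}" and t: "t permutes {1..n'}" and m1: "1 \<le> m" and n1: "1 \<le> n'"
    and x: "x \<notin> {1..m + n' - 1}"
  shows "comb m s t x = x"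
proof (cases "x < m")
  case True
  then have "x = 0" using x by auto
  then show ?thesis using True permutes_not_in[OF s] by (simp add: comb_def)
next
  case False
  then have "m + n' - 1 < x" using x m1 by auto
  then have "x + 1 - m \<notin> {1..n'}" by auto
  then have "t (x + 1 - m) = x + 1 - m" using permutes_not_in[OF t] by blast
  moreover have "x + 1 - m \<noteq> 1" using \<open>m + n' - 1 < x\<close> n1 by auto
  ultimately show ?thesis using False by (simp add: comb_def)
qed

lemma core:
  fixes m n' :: nat and s t :: "nat \<Rightarrow> nat" and S L :: "nat list"
  assumes s: "s permutes {1..m}" and t: "t permutes {1..n'}" and m2: "2 \<le> m" and n1: "1 \<le> n'"
    and cs: "cyc_list m s (1 # m # S)" and ct: "cyc_list n' t (1 # L)"
  shows "cyc_list (m + n' - 1) (comb m s t) (1 # m # map (\<lambda>x. x + m - 1) L @ S)"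
proof -
  let ?P = "comb m s t"
  let ?Lm = "map (\<lambda>x. x + m - 1) L"
  have Sset: "2 \<le> x \<and> x < m" if "x \<in> set S" for x
  proof -
    have "x \<in> {1..m}" "x \<noteq> 1" "x \<noteq> m" using cs that unfolding cyc_list_def by auto
    then show ?thesis by auto
  qed
  have Lset: "2 \<le> x \<and> x \<le> n'" if "x \<in> set L" for x
  proof -
    have "x \<in> {1..n'}" "x \<noteq> 1" using ct that unfolding cyc_list_def by auto
    then show ?thesis by auto
  qed
  have s1: "s 1 = m" using cs unfolding cyc_list_def by simp
  have sS: "successively (\<lambda>a b. s a = b) (m # S)" using cs unfolding cyc_list_def by simp
  have slast: "s (last (m # S)) = 1" using cs unfolding cyc_list_def by simp
  have tsu: "successively (\<lambda>a b. t a = b) (1 # L)" using ct unfolding cyc_list_def by simp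
  have tlast: "t (last (1 # L)) = 1" using ct unfolding cyc_list_def by simp
  have dS: "distinct S" using cs unfolding cyc_list_def by simp
  have dL: "distinct L" using ct unfolding cyc_list_def by simp
  have clo: "?P x = s x" if "x < m" for x using that by (simp add: comb_def)
  have clm: "?P (x + m - 1) = (if t x = 1 then s m else t x + m - 1)" if "1 \<le> x" for x
  proof -
    have "\<not> x + m - 1 < m" "x + m - 1 + 1 - m = x" using that m2 by auto
    then show ?thesis by (simp add: comb_def)
  qed
  have cm: "?P m = (if t 1 = 1 then s m else t 1 + m - 1)" using clm[of 1] by simp
  have clast: "?P (last (m # ?Lm)) = s m"
  proof (cases "L = []")
    case True
    then have "t 1 = 1" using tlast by simp
    then show ?thesis using cm True by simp
  next
    case False
    then have "last (m # ?Lm) = last L + m - 1" by (simp add: last_map)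
    moreover have "t (last L) = 1" using tlast False by simp
    moreover have "1 \<le> last L" using Lset[OF last_in_set[OF False]] by simp
    ultimately show ?thesis using clm by simp
  qed
  have B1: "successively (\<lambda>a b. ?P a = b) (m # ?Lm)"
  proof (cases "L = []")
    case True
    then show ?thesis by simp
  next
    case False
    have th: "t 1 = hd L" using tsu False by (cases L) auto
    have "hd L \<noteq> 1" using Lset[OF hd_in_set[OF False]] by simp
    then have h1: "?P m = hd ?Lm" using cm th False by (simp add: hd_map)
    have tL: "successively (\<lambda>a b. t a = b) L" using tsu by (cases L) auto
    have "successively (\<lambda>x y. ?P (x + m - 1) = y + m - 1) L"
    proof (rule successively_mono[OF tL])
      fix x y assume xy: "x \<in> set L" "y \<in> set L" "t x = y"
      then have "t x \<noteq> 1" "1 \<le> x" using Lset by fastforce+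
      then show "?P (x + m - 1) = y + m - 1" using clm xy by simp
    qed
    then have "successively (\<lambda>a b. ?P a = b) ?Lm" by (simp add: successively_map)
    then show ?thesis using h1 False by (simp add: successively_Cons)
  qed
  have B2: "successively (\<lambda>a b. ?P a = b) S"
  proof -
    have "successively (\<lambda>a b. s a = b) S" using sS by (cases S) auto
    then show ?thesis
    proof (rule successively_mono)
      fix x y assume "x \<in> set S" "y \<in> set S" "s x = y"
      then show "?P x = y" using clo Sset by auto
    qed
  qed
  have B3: "S = [] \<or> ?P (last (m # ?Lm)) = hd S"
  proof (cases "S = []")
    case False
    have "s m = hd S" using sS False by (cases S) auto
    then show ?thesis using clast by simp
  qed simp
  have A: "successively (\<lambda>a b. ?P a = b) ((m # ?Lm) @ S)"
    using B1 B2 B3 by (simp only: successively_append_iff) simp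
  have su: "successively (\<lambda>a b. ?P a = b) (1 # m # ?Lm @ S)"
    using A s1 clo[of 1] m2 by (simp add: successively_Cons)
  have lst: "?P (last (1 # m # ?Lm @ S)) = 1"
  proof (cases "S = []")
    case True
    then have "last (1 # m # ?Lm @ S) = last (m # ?Lm)" by simp
    then show ?thesis using clast slast True by simp
  next
    case False
    then have "last (1 # m # ?Lm @ S) = last S" by simp
    moreover have "last S < m" using Sset[OF last_in_set[OF False]] by simp
    ultimately show ?thesis using clo slast False by simp
  qed
  have d: "distinct (1 # m # ?Lm @ S)"
  proof -
    have "inj_on (\<lambda>x. x + m - 1) (set L)" using m2 by (intro inj_onI) auto
    then have "distinct ?Lm" using dL by (simp add: distinct_map)
    moreover have "\<forall>x\<in>set ?Lm. m < x" using Lset m2 by fastforce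
    moreover have "\<forall>x\<in>set S. 1 < x \<and> x < m" using Sset by fastforce
    ultimately show ?thesis using dS m2 by fastforce
  qed
  have st: "set (1 # m # ?Lm @ S) = {1..m + n' - 1}"
  proof
    show "set (1 # m # ?Lm @ S) \<subseteq> {1..m + n' - 1}"
      using Lset Sset m2 n1 by fastforce
  next
    show "{1..m + n' - 1} \<subseteq> set (1 # m # ?Lm @ S)"
    proof
      fix x assume x: "x \<in> {1..m + n' - 1}"
      consider "x \<le> m" | "m < x" by linarith
      then show "x \<in> set (1 # m # ?Lm @ S)"
      proof cases
        case 1
        then have "x \<in> set (1 # m # S)" using cs x unfolding cyc_list_def by auto
        then show ?thesis by auto
      next
        case 2
        then have "x + 1 - m \<in> set (1 # L)" using ct x unfolding cyc_list_def by auto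
        moreover have "x + 1 - m \<noteq> 1" using 2 by auto
        ultimately have "x + 1 - m \<in> set L" by simp
        moreover have "x = (x + 1 - m) + m - 1" using 2 by auto
        ultimately have "x \<in> set ?Lm" by (metis (no_types, lifting) image_eqI set_map)
        then show ?thesis by simp
      qed
    qed
  qed
  show ?thesis unfolding cyc_list_def using d st su lst by simp
qed

lemma core_perm:
  fixes m n' :: nat and s t :: "nat \<Rightarrow> nat" and S L :: "nat list"
  assumes s: "s permutes {1..m}" and t: "t permutes {1..n'}" and m2: "2 \<le> m" and n1: "1 \<le> n'"
    and cs: "cyc_list m s (1 # m # S)" and ct: "cyc_list n' t (1 # L)"
  shows "comb m s t permutes {1..m + n' - 1}"
proof -
  let ?c = "1 # m # map (\<lambda>x. x + m - 1) L @ S"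
  have cc: "cyc_list (m + n' - 1) (comb m s t) ?c" by (rule core[OF assms])
  have "pol ?c permutes {1..m + n' - 1} \<and> cyc_list (m + n' - 1) (pol ?c) ?c"
    using G4[of ?c "m + n' - 1"] cc m2 n1 unfolding cyc_list_def by simp
  moreover have "comb m s t = pol ?c"
  proof (rule G3[OF cc])
    show "cyc_list (m + n' - 1) (pol ?c) ?c" using calculation by blast
    fix x assume "x \<notin> {1..m + n' - 1}"
    then show "comb m s t x = x \<and> pol ?c x = x"
      using comb_out[OF s t _ n1] m2 permutes_not_in calculation by fastforce
  qed
  ultimately show ?thesis by simp
qed



definition Aset :: "nat \<Rightarrow> nat \<Rightarrow> (nat \<Rightarrow> nat) set" where
  "Aset n k = {\<pi>. \<pi> permutes {1..n} \<and> cyclic_perm n \<pi> \<and>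
       avoids (one_line n \<pi>) (delta k) \<and> avoids (cycle_form n \<pi>) [2,1,3]}"

definition Bset :: "nat \<Rightarrow> nat \<Rightarrow> (nat \<Rightarrow> nat) set" where
  "Bset n k = {\<pi>. \<pi> permutes {1..n} \<and> cyclic_perm n \<pi> \<and>
       avoids (one_line n \<pi>) (delta k) \<and> avoids (cycle_form n \<pi>) [2,1,3] \<and> \<pi> 1 = n}"

lemma a_card: "a_213 n k = card (Aset n k)"
  unfolding a_213_def Aset_def by simp

lemma b_card: "b_213 n k = card (Bset n k)"
  unfolding b_213_def Bset_def by simp

lemma list2: "2 \<le> length xs \<Longrightarrow> xs = xs ! 0 # xs ! 1 # drop 2 xs"
  by (cases xs; cases "tl xs") auto

lemma subseq_single: "x \<in> set xs \<Longrightarrow> subseq [x] xs"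
  by (induction xs) (auto simp: list_emb.list_emb_Cons)

lemma cyc_S:
  assumes "cyc_list m s (1 # m # S)" "x \<in> set S"
  shows "2 \<le> x \<and> x < m"
proof -
  have "x \<in> {1..m}" "x \<noteq> 1" "x \<noteq> m" using assms unfolding cyc_list_def by auto
  then show ?thesis by auto
qed

lemma cyc_L:
  assumes "cyc_list n' t (1 # L)" "x \<in> set L"
  shows "2 \<le> x \<and> x \<le> n'"
proof -
  have "x \<in> {1..n'}" "x \<noteq> 1" using assms unfolding cyc_list_def by auto
  then show ?thesis by auto
qed

lemma comb_at:
  assumes "1 \<le> y" "1 \<le> m"
  shows "comb m s t (y + m - 1) = (if t y = 1 then s m else t y + m - 1)"
proof -
  have "\<not> y + m - 1 < m" "y + m - 1 + 1 - m = y" using assms by auto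
  then show ?thesis by (simp add: comb_def)
qed

lemma shape_s:
  assumes "s permutes {1..m}" "cyclic_perm m s" "s 1 = m" "2 \<le> m"
  shows "cycle_form m s = 1 # m # drop 2 (cycle_form m s) \<and> cyc_list m s (cycle_form m s)"
proof -
  let ?c = "cycle_form m s"
  have cl: "cyc_list m s ?c" using G1 assms by simp
  have len: "length ?c = m" using cyc_len[OF cl] .
  have "?c \<noteq> []" using len assms(4) by auto
  then have "?c ! 0 = hd ?c" by (simp add: hd_conv_nth)
  then have c0: "?c ! 0 = 1" using cl unfolding cyc_list_def by simp
  have su: "successively (\<lambda>a b. s a = b) ?c" using cl unfolding cyc_list_def by simp
  have "s (?c ! 0) = ?c ! Suc 0" using successively_nth[OF su, of 0] len assms(4) by simp
  then have c1: "?c ! 1 = m" using c0 assms(3) by simp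
  have "?c = ?c ! 0 # ?c ! 1 # drop 2 ?c" using len assms(4) by (intro list2) simp
  then show ?thesis using c0 c1 cl by simp
qed

lemma shape_t:
  assumes "t permutes {1..n'}" "cyclic_perm n' t" "1 \<le> n'"
  shows "cycle_form n' t = 1 # tl (cycle_form n' t) \<and> cyc_list n' t (cycle_form n' t)"
proof -
  let ?c = "cycle_form n' t"
  have cl: "cyc_list n' t ?c" using G1 assms by simp
  have len: "length ?c = n'" using cyc_len[OF cl] .
  then have "?c \<noteq> []" using assms(3) by auto
  then have "?c = hd ?c # tl ?c" by simp
  then show ?thesis using cl unfolding cyc_list_def by simp
qed

lemma C1:
  assumes m2: "2 \<le> m" and n1: "1 \<le> n'" and k2: "2 \<le> k" and sB: "s \<in> Bset m k" and tA: "t \<in> Aset n' k"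
  shows "comb m s t \<in> Aset (m + n' - 1) k"
proof -
  have sp: "s permutes {1..m}" "cyclic_perm m s" "avoids (one_line m s) (delta k)"
    "avoids (cycle_form m s) [2,1,3]" "s 1 = m" using sB unfolding Bset_def by auto
  have tp: "t permutes {1..n'}" "cyclic_perm n' t" "avoids (one_line n' t) (delta k)"
    "avoids (cycle_form n' t) [2,1,3]" using tA unfolding Aset_def by auto
  define S where "S = drop 2 (cycle_form m s)"
  define L where "L = tl (cycle_form n' t)"
  have cse: "cycle_form m s = 1 # m # S" and cs: "cyc_list m s (1 # m # S)"
    using shape_s[OF sp(1,2,5) m2] unfolding S_def by auto
  have cte: "cycle_form n' t = 1 # L" and ct: "cyc_list n' t (1 # L)"
    using shape_t[OF tp(1,2) n1] unfolding L_def by auto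
  let ?Lm = "map (\<lambda>x. x + m - 1) L"
  let ?c = "1 # m # ?Lm @ S"
  let ?n = "m + n' - 1"
  have cc: "cyc_list ?n (comb m s t) ?c" by (rule core[OF sp(1) tp(1) m2 n1 cs ct])
  have cp: "comb m s t permutes {1..?n}" by (rule core_perm[OF sp(1) tp(1) m2 n1 cs ct])
  have g2: "cyclic_perm ?n (comb m s t) \<and> cycle_form ?n (comb m s t) = ?c"
    using G2[OF cc] m2 by simp
  have np: "\<not> pat ?c"
  proof
    assume pc: "pat ?c"
    have "\<forall>v\<in>set (m # ?Lm @ S). 1 \<le> v" using cc unfolding cyc_list_def by auto
    then have "pat (m # ?Lm @ S)" using pat_cons_min pc by blast
    moreover have Lmgt: "\<forall>x\<in>set ?Lm. m < x"
    proof
      fix x assume "x \<in> set ?Lm"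
      then obtain y where y: "y \<in> set L" "x = y + m - 1" by auto
      then have "2 \<le> y" using cyc_L[OF ct] by blast
      then show "m < x" using y(2) by simp
    qed
    moreover have "\<forall>x\<in>set S. x < m" using cyc_S[OF cs] by blast
    ultimately have "pat (m # S) \<or> pat ?Lm" by (rule pat_split)
    then show False
    proof
      assume "pat (m # S)"
      then have "pat (1 # m # S)" by (rule pat_cons)
      then show False using sp(4) cse avoid213 by simp
    next
      assume h: "pat ?Lm"
      have "\<forall>x\<in>set ?Lm. \<forall>y\<in>set ?Lm. x < y \<longrightarrow> x - (m - 1) < y - (m - 1)"
      proof (intro ballI impI)
        fix x y assume "x \<in> set ?Lm" "y \<in> set ?Lm" "x < y"
        moreover have "m - 1 \<le> x" using Lmgt \<open>x \<in> set ?Lm\<close> by fastforce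
        ultimately show "x - (m - 1) < y - (m - 1)" using diff_less_mono by blast
      qed
      then have "pat (map (\<lambda>x. x - (m - 1)) ?Lm)" by (rule pat_map[OF h])
      moreover have "map (\<lambda>x. x - (m - 1)) ?Lm = L"
      proof -
        have "(\<lambda>x. x - (m - 1)) \<circ> (\<lambda>x. x + m - 1) = id" using m2 by (auto simp: fun_eq_iff)
        then show ?thesis by (simp add: map_map)
      qed
      ultimately have "pat L" by simp
      then have "pat (1 # L)" by (rule pat_cons)
      then show False using tp(4) cte avoid213 by simp
    qed
  qed
  have "\<not> dec s k m" "\<not> dec t k n'" using sp(3) tp(3) avoid_dec by auto
  then have "\<not> dec (comb m s t) k ?n" using D1[OF sp(1) tp(1) _ n1 k2] m2 by auto
  then have "avoids (one_line ?n (comb m s t)) (delta k)" using avoid_dec by simp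
  moreover have "avoids (cycle_form ?n (comb m s t)) [2,1,3]" using g2 np avoid213 by simp
  ultimately show ?thesis using cp g2 unfolding Aset_def by simp
qed



lemma C3:
  assumes n2: "2 \<le> n" and k1: "1 \<le> k" and pA: "p \<in> Aset n k"
  shows "\<exists>m\<in>{2..n}. \<exists>s\<in>Bset m k. \<exists>t\<in>Aset (n + 1 - m) k. p = comb m s t"
proof -
  have pp: "p permutes {1..n}" "cyclic_perm n p" "avoids (one_line n p) (delta k)"
    "avoids (cycle_form n p) [2,1,3]" using pA unfolding Aset_def by auto
  define m where "m = p 1"
  define c where "c = cycle_form n p"
  have cl: "cyc_list n p c" unfolding c_def using G1 pp n2 by simp
  have len: "length c = n" using cyc_len[OF cl] .
  have "c \<noteq> []" using len n2 by auto
  then have "c ! 0 = hd c" by (simp add: hd_conv_nth)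
  then have c0: "c ! 0 = 1" using cl unfolding cyc_list_def by simp
  have su: "successively (\<lambda>a b. p a = b) c" using cl unfolding cyc_list_def by simp
  have "p (c ! 0) = c ! Suc 0" using successively_nth[OF su, of 0] len n2 by simp
  then have c1: "c ! 1 = m" using c0 m_def by simp
  define w where "w = drop 2 c"
  have ce: "c = 1 # m # w" using list2[of c] len n2 c0 c1 w_def by simp
  have dc: "distinct (1 # m # w)" using cl ce unfolding cyc_list_def by simp
  have sc: "set (1 # m # w) = {1..n}" using cl ce unfolding cyc_list_def by simp
  have m1: "m \<noteq> 1" using dc by simp
  have mn: "m \<in> {2..n}" using sc m1 by auto
  have np: "\<not> pat c" using pp(4) avoid213 c_def by simp
  define L where "L = takeWhile (\<lambda>x. m < x) w"
  define S where "S = dropWhile (\<lambda>x. m < x) w"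
  have wLS: "w = L @ S" unfolding L_def S_def by simp
  have Lgt: "\<forall>x\<in>set L. m < x" unfolding L_def by (auto dest: set_takeWhileD)
  have mw: "m \<notin> set w" "1 \<notin> set w" using dc by auto
  have Slt: "\<forall>x\<in>set S. x < m"
  proof (rule ccontr)
    assume "\<not> (\<forall>x\<in>set S. x < m)"
    then obtain x where x: "x \<in> set S" "\<not> x < m" by blast
    have "x \<in> set w" using x wLS by simp
    then have "x \<noteq> m" using mw by auto
    then have xm: "m < x" using x by simp
    have Sne: "S \<noteq> []" using x by auto
    have "\<not> m < hd S" using Sne unfolding S_def by (metis hd_dropWhile)
    moreover have "hd S \<in> set w" using Sne wLS by simp
    ultimately have hm: "hd S < m" using mw by (metis nat_neq_iff)
    have Sc: "S = hd S # tl S" using Sne by simp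
    have "x \<noteq> hd S" using hm xm by simp
    then have "x \<in> set (tl S)" using x Sc by (metis set_ConsD)
    then have "subseq [x] (tl S)" by (rule subseq_single)
    then have "subseq [hd S, x] (hd S # tl S)" by (rule subseq_Cons2)
    then have "subseq [hd S, x] (L @ S)" using Sc by (metis subseq_drop_many)
    then have "subseq [m, hd S, x] (m # L @ S)" by (rule subseq_Cons2)
    then have "subseq [m, hd S, x] (1 # m # L @ S)" by (rule list_emb.list_emb_Cons)
    then have "pat c" using hm xm ce wLS unfolding pat_def by blast
    then show False using np by simp
  qed
  have Sin: "2 \<le> x \<and> x < m" if "x \<in> set S" for x
  proof -
    have "x \<in> {1..n}" "x \<noteq> 1" using sc mw that wLS by auto
    then show ?thesis using Slt that by auto
  qed
  have Lin: "m < x \<and> x \<le> n" if "x \<in> set L" for x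
    using Lgt sc that wLS by auto
  have dLS: "distinct (1 # m # L @ S)" using dc wLS by simp
  have m2: "2 \<le> m" "m \<le> n" using mn by auto
  let ?cs = "1 # m # S"
  have dcs: "distinct ?cs" using dLS by auto
  have scs: "set ?cs = {1..m}"
  proof
    show "set ?cs \<subseteq> {1..m}" using Sin m2 by fastforce
    show "{1..m} \<subseteq> set ?cs"
    proof
      fix x assume x: "x \<in> {1..m}"
      then have "x \<in> set (1 # m # L @ S)" using sc wLS m2 by auto
      moreover have "x \<notin> set L" using Lin x by fastforce
      ultimately show "x \<in> set ?cs" by auto
    qed
  qed
  define s where "s = pol ?cs"
  have g4s: "s permutes {1..m} \<and> cyc_list m s ?cs" unfolding s_def using G4[OF dcs scs] m2 by simp
  have g2s: "cyclic_perm m s \<and> cycle_form m s = ?cs" using G2[OF conjunct2[OF g4s]] m2 by simp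
  have s1: "s 1 = m" using g4s unfolding cyc_list_def by simp
  define n' where "n' = n + 1 - m"
  have n1: "1 \<le> n'" and nn: "m + n' - 1 = n" using m2 unfolding n'_def by auto
  define L' where "L' = map (\<lambda>x. x - (m - 1)) L"
  let ?ct = "1 # L'"
  have injg: "inj_on (\<lambda>x. x - (m - 1)) (set L)"
  proof (rule inj_onI)
    fix x y assume "x \<in> set L" "y \<in> set L" "x - (m - 1) = y - (m - 1)"
    moreover have "m < x" "m < y" using Lin calculation by auto
    ultimately show "x = y" by simp
  qed
  have L'in: "2 \<le> y \<and> y \<le> n'" if yin: "y \<in> set L'" for y
  proof -
    obtain x where "x \<in> set L" "y = x - (m - 1)" using yin unfolding L'_def by auto
    then show ?thesis using Lin[of x] m2 unfolding n'_def by auto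
  qed
  have dct: "distinct ?ct"
  proof -
    have "distinct L" using dLS by simp
    then have "distinct L'" unfolding L'_def using injg by (simp add: distinct_map)
    moreover have "1 \<notin> set L'" using L'in by fastforce
    ultimately show ?thesis by simp
  qed
  have sct: "set ?ct = {1..n'}"
  proof
    show "set ?ct \<subseteq> {1..n'}" using L'in n1 by fastforce
    show "{1..n'} \<subseteq> set ?ct"
    proof
      fix y assume y: "y \<in> {1..n'}"
      show "y \<in> set ?ct"
      proof (cases "y = 1")
        case False
        define x where "x = y + m - 1"
        have xr: "m < x" "x \<le> n" using y False m2 unfolding x_def n'_def by auto
        then have "x \<in> set (1 # m # L @ S)" using sc wLS by auto
        moreover have "x \<notin> set S" using Slt xr by fastforce
        ultimately have "x \<in> set L" using xr m2 by auto
        moreover have "y = x - (m - 1)" unfolding x_def using m2 by simp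
        ultimately have "y \<in> set L'" unfolding L'_def by simp
        then show ?thesis by simp
      qed simp
    qed
  qed
  define t where "t = pol ?ct"
  have g4t: "t permutes {1..n'} \<and> cyc_list n' t ?ct" unfolding t_def using G4[OF dct sct] n1 by simp
  have g2t: "cyclic_perm n' t \<and> cycle_form n' t = ?ct" using G2[OF conjunct2[OF g4t] n1] by simp
  have LL: "map (\<lambda>x. x + m - 1) L' = L"
  proof -
    have "map (\<lambda>x. x + m - 1) L' = map ((\<lambda>x. x + m - 1) \<circ> (\<lambda>x. x - (m - 1))) L"
      unfolding L'_def by simp
    also have "\<dots> = L"
    proof (intro map_idI)
      fix x assume "x \<in> set L"
      then have "m < x" using Lin by blast
      then show "((\<lambda>x. x + m - 1) \<circ> (\<lambda>x. x - (m - 1))) x = x" using m2 by simp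
    qed
    finally show ?thesis .
  qed
  have cc: "cyc_list n (comb m s t) c"
    using core[OF conjunct1[OF g4s] conjunct1[OF g4t] m2(1) n1 conjunct2[OF g4s] conjunct2[OF g4t]]
    unfolding LL nn ce wLS .
  have peq: "p = comb m s t"
  proof (rule G3[OF cl cc])
    fix x assume x: "x \<notin> {1..n}"
    show "p x = x \<and> comb m s t x = x"
      using permutes_not_in[OF pp(1) x] comb_out[OF conjunct1[OF g4s] conjunct1[OF g4t] _ n1, of x] x nn m2
      by simp
  qed
  have nd: "\<not> dec p k n" using pp(3) avoid_dec by simp
  have sB: "s \<in> Bset m k"
  proof -
    have "\<not> dec s k m"
    proof
      assume "dec s k m"
      then have "dec (comb m s t) k (m + n' - 1)"
        using D2[OF conjunct1[OF g4s] conjunct1[OF g4t] _ n1 k1] m2 by simp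
      then show False using nd peq nn by simp
    qed
    then have a1: "avoids (one_line m s) (delta k)" using avoid_dec by simp
    have "\<not> pat ?cs"
    proof
      assume "pat ?cs"
      moreover have "subseq ?cs c" unfolding ce wLS
        by (intro subseq_Cons2) (rule subseq_drop_many, rule subseq_order.order_refl)
      ultimately show False using np pat_mono by blast
    qed
    then have "avoids (cycle_form m s) [2,1,3]" using g2s avoid213 by simp
    then show ?thesis using a1 g4s g2s s1 unfolding Bset_def by simp
  qed
  have tA: "t \<in> Aset n' k"
  proof -
    have "\<not> dec t k n'"
    proof
      assume "dec t k n'"
      then have "dec (comb m s t) k (m + n' - 1)"
        using D3[OF conjunct1[OF g4s] conjunct1[OF g4t] _ n1] m2 by simp
      then show False using nd peq nn by simp
    qed
    then have a1: "avoids (one_line n' t) (delta k)" using avoid_dec by simp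
    have "\<not> pat ?ct"
    proof
      assume "pat ?ct"
      moreover have "\<forall>v\<in>set L'. 1 \<le> v" using L'in by fastforce
      ultimately have "pat L'" by (rule pat_cons_min)
      moreover have "\<forall>x\<in>set L'. \<forall>y\<in>set L'. x < y \<longrightarrow> x + m - 1 < y + m - 1" using m2 by auto
      ultimately have "pat (map (\<lambda>x. x + m - 1) L')" by (rule pat_map)
      then have "pat L" using LL by simp
      moreover have "subseq L c" unfolding ce wLS
        by (intro list_emb.list_emb_Cons) (rule subseq_rev_drop_many, rule subseq_order.order_refl)
      ultimately show False using np pat_mono by blast
    qed
    then have "avoids (cycle_form n' t) [2,1,3]" using g2t avoid213 by simp
    then show ?thesis using a1 g4t g2t unfolding Aset_def by simp
  qed
  show ?thesis using mn sB tA peq unfolding n'_def by blast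
qed



lemma comb_inj:
  assumes m2: "2 \<le> m" and n1: "1 \<le> n'"
    and s: "s permutes {1..m}" and s': "s' permutes {1..m}"
    and t: "t permutes {1..n'}" and t': "t' permutes {1..n'}"
    and eq: "comb m s t = comb m s' t'"
  shows "s = s' \<and> t = t'"
proof -
  have sm: "s m \<le> m" "s' m \<le> m" using permutes_in_image[OF s, of m] permutes_in_image[OF s', of m] m2 by auto
  have tge: "1 \<le> t y" "1 \<le> t' y" if "1 \<le> y" for y
  proof -
    show "1 \<le> t y"
    proof (cases "y \<in> {1..n'}")
      case True then show ?thesis using permutes_in_image[OF t] by auto
    next
      case False then show ?thesis using permutes_not_in[OF t] that by auto
    qed
    show "1 \<le> t' y"
    proof (cases "y \<in> {1..n'}")
      case True then show ?thesis using permutes_in_image[OF t'] by auto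
    next
      case False then show ?thesis using permutes_not_in[OF t'] that by auto
    qed
  qed
  have ca: "comb m s t (y + m - 1) = comb m s' t' (y + m - 1)" for y using eq by simp
  have teq: "t y = t' y" for y
  proof (cases "1 \<le> y")
    case False
    then have "y = 0" by simp
    then show ?thesis using permutes_not_in[OF t, of 0] permutes_not_in[OF t', of 0] by simp
  next
    case True
    have e: "(if t y = 1 then s m else t y + m - 1) = (if t' y = 1 then s' m else t' y + m - 1)"
      using ca[of y] comb_at[OF True, of m] m2 by simp
    show ?thesis
    proof (cases "t y = 1"; cases "t' y = 1")
      assume "t y = 1" "t' y = 1" then show ?thesis by simp
    next
      assume h: "t y = 1" "t' y \<noteq> 1"
      then have "s m = t' y + m - 1" using e by simp
      moreover have "2 \<le> t' y" using tge(2)[OF True] h(2) by simp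
      ultimately show ?thesis using sm by simp
    next
      assume h: "t y \<noteq> 1" "t' y = 1"
      then have "s' m = t y + m - 1" using e by simp
      moreover have "2 \<le> t y" using tge(1)[OF True] h(1) by simp
      ultimately show ?thesis using sm by simp
    next
      assume h: "t y \<noteq> 1" "t' y \<noteq> 1"
      then have "t y + m - 1 = t' y + m - 1" using e by simp
      then show ?thesis using m2 by simp
    qed
  qed
  then have tt: "t = t'" by blast
  have "1 \<in> t ` {1..n'}" using permutes_image[OF t] n1 by simp
  then obtain q where q: "q \<in> {1..n'}" "t q = 1" by (auto elim!: imageE)
  have smm: "s m = s' m" using ca[of q] comb_at[of q m] q tt m2 by simp
  have sx: "s x = s' x" if "x \<noteq> m" for x
  proof (cases "x < m")
    case True
    then show ?thesis using eq unfolding comb_def by (metis (no_types))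
  next
    case False
    then have "x \<notin> {1..m}" using that by auto
    then show ?thesis using permutes_not_in[OF s] permutes_not_in[OF s'] by metis
  qed
  have "s = s'"
  proof
    fix x show "s x = s' x" using smm sx by (cases "x = m") auto
  qed
  then show ?thesis using tt by simp
qed

lemma finite_Aset: "finite (Aset n k)"
  by (rule finite_subset[of _ "{p. p permutes {1..n}}"]) (auto simp: Aset_def finite_permutations)

lemma finite_Bset: "finite (Bset n k)"
  by (rule finite_subset[of _ "{p. p permutes {1..n}}"]) (auto simp: Bset_def finite_permutations)

theorem lemma2p2:
  fixes n k :: nat
  assumes "n \<ge> 2" and "k \<ge> 3"
  shows "a_213 n k = (\<Sum>j=2..n. b_213 j k * a_213 (n + 1 - j) k)"
proof -
  let ?F = "\<lambda>m. (\<lambda>(s, t). comb m s t) ` (Bset m k \<times> Aset (n + 1 - m) k)"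
  have decomp: "Aset n k = (\<Union>m\<in>{2..n}. ?F m)"
  proof
    show "Aset n k \<subseteq> (\<Union>m\<in>{2..n}. ?F m)"
    proof
      fix p assume "p \<in> Aset n k"
      then obtain m s t where "m \<in> {2..n}" "s \<in> Bset m k" "t \<in> Aset (n + 1 - m) k" "p = comb m s t"
        using C3[of n k p] assms by auto
      then show "p \<in> (\<Union>m\<in>{2..n}. ?F m)" by force
    qed
    show "(\<Union>m\<in>{2..n}. ?F m) \<subseteq> Aset n k"
    proof
      fix p assume "p \<in> (\<Union>m\<in>{2..n}. ?F m)"
      then obtain m s t where m: "m \<in> {2..n}" and st: "s \<in> Bset m k" "t \<in> Aset (n + 1 - m) k"
        and p: "p = comb m s t" by auto
      have "comb m s t \<in> Aset (m + (n + 1 - m) - 1) k"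
        using C1[OF _ _ _ st] m assms by auto
      moreover have "m + (n + 1 - m) - 1 = n" using m by auto
      ultimately show "p \<in> Aset n k" using p by simp
    qed
  qed
  have fin: "finite (?F m)" for m using finite_Aset finite_Bset by auto
  have disj: "?F i \<inter> ?F j = {}" if ij: "i \<in> {2..n}" "j \<in> {2..n}" "i \<noteq> j" for i j
  proof -
    have v: "p 1 = m" if pin: "p \<in> ?F m" and mm: "m \<in> {2..n}" for p m
    proof -
      obtain s t where st: "s \<in> Bset m k" "p = comb m s t" using pin by auto
      have "s 1 = m" using st(1) unfolding Bset_def by simp
      then show ?thesis using st(2) mm unfolding comb_def by auto
    qed
    show ?thesis
    proof (rule equals0I)
      fix p assume pij: "p \<in> ?F i \<inter> ?F j"
      then have pi: "p \<in> ?F i" and pj: "p \<in> ?F j" by (rule IntD1, rule IntD2)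
      have "p 1 = i" using pi ij(1) by (rule v)
      moreover have "p 1 = j" using pj ij(2) by (rule v)
      ultimately show False using ij(3) by simp
    qed
  qed
  have cardF: "card (?F m) = b_213 m k * a_213 (n + 1 - m) k" if m: "m \<in> {2..n}" for m
  proof -
    have "inj_on (\<lambda>(s, t). comb m s t) (Bset m k \<times> Aset (n + 1 - m) k)"
    proof (rule inj_onI, clarify)
      fix s t s' t' assume h: "s \<in> Bset m k" "t \<in> Aset (n + 1 - m) k" "s' \<in> Bset m k"
        "t' \<in> Aset (n + 1 - m) k" "comb m s t = comb m s' t'"
      show "s = s' \<and> t = t'"
        by (rule comb_inj[of m "n + 1 - m"]) (use h m in \<open>auto simp: Aset_def Bset_def\<close>)
    qed
    then have "card (?F m) = card (Bset m k \<times> Aset (n + 1 - m) k)" by (rule card_image)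
    also have "\<dots> = card (Bset m k) * card (Aset (n + 1 - m) k)" by (rule card_cartesian_product)
    finally show ?thesis by (simp add: a_card b_card)
  qed
  have "a_213 n k = card (\<Union>m\<in>{2..n}. ?F m)" using decomp a_card by simp
  also have "\<dots> = (\<Sum>m\<in>{2..n}. card (?F m))"
    by (rule card_UN_disjoint) (use fin disj in auto)
  also have "\<dots> = (\<Sum>j=2..n. b_213 j k * a_213 (n + 1 - j) k)"
    by (rule sum.cong) (use cardF in auto)
  finally show ?thesis .
qed

end
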